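(* Let $X$ be a polyhedral normed space and $f: X\to X$ nonexpansive and real analytic. Let $\mathcal{M}(f)$ be the union of all minimal locked subsets of $B_{X^*}$ for $f$. If $x,y\in\operatorname{Fix}(f)$ satisfy $\phi(x)=\phi(y)$ for all $\phi\in\mathcal{M}(f)$, then $x=y$.
   Context: A polyhedral normed space is a finite-dimensional real normed space whose closed unit ball has finitely many extreme points; $B_{X^*}$ is the closed unit ball of the dual space. Nonexpansive: $\|f(x)-f(y)\|\le\|x-y\|$ for all $x,y$. Real analytic: locally given by a convergent power series. $\operatorname{Fix}(f)$ is the fixed point set of $f$. The duality map is $J(x)=\{\phi\in B_{X^*}: \phi(x)=\|x\|\}$. For $E\subseteq B_{X^*}$: $S_E(f)=\{x\in X: \phi(f(x))=\phi(x)\text{ for all }\phi\in E\}$. A set $E\subseteq B_{X^*}$ is locked (for $f$) if there exist $v,w\in S_E(f)$ with $J(v-w)=E$; a locked set is minimal if no proper subset of it is locked. *)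

theory Defs
  imports "HOL-Analysis.Analysis"
begin

text \<open>A finite-dimensional real normed space is modelled as a euclidean_space type 'a
(used only for its linear and topological structure) equipped with an arbitrary norm N.\<close>

definition is_norm :: "('a::real_vector \<Rightarrow> real) \<Rightarrow> bool" where
  "is_norm N \<longleftrightarrow> (\<forall>x y. N (x + y) \<le> N x + N y) \<and> (\<forall>c x. N (c *\<^sub>R x) = \<bar>c\<bar> * N x)
     \<and> (\<forall>x. N x = 0 \<longleftrightarrow> x = 0)"

definition polyhedral_norm :: "('a::euclidean_space \<Rightarrow> real) \<Rightarrow> bool" where
  "polyhedral_norm N \<longleftrightarrow> is_norm N \<and> finite {p. p extreme_point_of {x. N x \<le> 1}}"

text \<open>Closed unit ball of the dual space (all linear functionals are bounded in finite dimension).\<close>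
definition dual_ball :: "('a::real_vector \<Rightarrow> real) \<Rightarrow> ('a \<Rightarrow> real) set" where
  "dual_ball N = {\<phi>. linear \<phi> \<and> (\<forall>x. \<bar>\<phi> x\<bar> \<le> N x)}"

definition nonexpansive :: "('a::real_vector \<Rightarrow> real) \<Rightarrow> ('a \<Rightarrow> 'a) \<Rightarrow> bool" where
  "nonexpansive N f \<longleftrightarrow> (\<forall>x y. N (f x - f y) \<le> N (x - y))"

definition monomial :: "('a::euclidean_space \<Rightarrow> nat) \<Rightarrow> 'a \<Rightarrow> real" where
  "monomial \<alpha> v = (\<Prod>i\<in>Basis. (v \<bullet> i) ^ \<alpha> i)"

definition multi_indices :: "('a::euclidean_space \<Rightarrow> nat) set" where
  "multi_indices = {\<alpha>. \<forall>i. i \<notin> Basis \<longrightarrow> \<alpha> i = 0}"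

definition real_analytic :: "('a::euclidean_space \<Rightarrow> 'b::euclidean_space) \<Rightarrow> bool" where
  "real_analytic f \<longleftrightarrow> (\<forall>x0. \<exists>r>0. \<exists>c :: ('a \<Rightarrow> nat) \<Rightarrow> 'b.
      \<forall>x\<in>ball x0 r. ((\<lambda>\<alpha>. monomial \<alpha> (x - x0) *\<^sub>R c \<alpha>) has_sum f x) multi_indices)"

definition duality_map :: "('a::real_vector \<Rightarrow> real) \<Rightarrow> 'a \<Rightarrow> ('a \<Rightarrow> real) set" where
  "duality_map N x = {\<phi> \<in> dual_ball N. \<phi> x = N x}"

definition S_set :: "('a \<Rightarrow> real) set \<Rightarrow> ('a \<Rightarrow> 'a) \<Rightarrow> 'a set" where
  "S_set E f = {x. \<forall>\<phi>\<in>E. \<phi> (f x) = \<phi> x}"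

definition locked :: "('a::real_vector \<Rightarrow> real) \<Rightarrow> ('a \<Rightarrow> 'a) \<Rightarrow> ('a \<Rightarrow> real) set \<Rightarrow> bool" where
  "locked N f E \<longleftrightarrow> E \<subseteq> dual_ball N \<and>
     (\<exists>v\<in>S_set E f. \<exists>w\<in>S_set E f. duality_map N (v - w) = E)"

definition minimal_locked :: "('a::real_vector \<Rightarrow> real) \<Rightarrow> ('a \<Rightarrow> 'a) \<Rightarrow> ('a \<Rightarrow> real) set \<Rightarrow> bool" where
  "minimal_locked N f E \<longleftrightarrow> locked N f E \<and> (\<forall>E'. E' \<subset> E \<longrightarrow> \<not> locked N f E')"

definition M_set :: "('a::real_vector \<Rightarrow> real) \<Rightarrow> ('a \<Rightarrow> 'a) \<Rightarrow> ('a \<Rightarrow> real) set" where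
  "M_set N f = \<Union>{E. minimal_locked N f E}"

end

theory Submission
  imports Defs
begin

lemma nb:
  assumes "is_norm N"
  shows "N 0 = 0" "N (-x) = N x" "N x \<ge> 0" "N (x - y) = N (y - x)"
    "N (x + y) \<le> N x + N y" "N (c *\<^sub>R x) = \<bar>c\<bar> * N x" "N x = 0 \<longleftrightarrow> x = 0"
proof -
  have h: "N (c *\<^sub>R x) = \<bar>c\<bar> * N x" for c x using assms unfolding is_norm_def by blast
  show "N 0 = 0" using assms unfolding is_norm_def by blast
  show m: "N (-x) = N x" for x using h[of "-1" x] by simp
  show "N (x + y) \<le> N x + N y" using assms unfolding is_norm_def by blast
  have "N 0 \<le> N x + N (-x)" using assms unfolding is_norm_def by (metis add.right_inverse)
  then show "N x \<ge> 0" using m \<open>N 0 = 0\<close> by simp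
  show "N (x - y) = N (y - x)" using m[of "x - y"] by simp
  show "N (c *\<^sub>R x) = \<bar>c\<bar> * N x" by (rule h)
  show "N x = 0 \<longleftrightarrow> x = 0" using assms unfolding is_norm_def by blast
qed

lemma norm_upper:
  fixes N :: "'a::euclidean_space \<Rightarrow> real"
  assumes "is_norm N"
  shows "N x \<le> (\<Sum>i\<in>Basis. N i) * norm x"
proof -
  have sub: "N (sum g S) \<le> (\<Sum>i\<in>S. N (g i))" if "finite S" for g :: "'a \<Rightarrow> 'a" and S
    using that
  proof (induction S rule: finite_induct)
    case empty then show ?case using nb(1)[OF assms] by simp
  next
    case (insert a S)
    then show ?case using nb(5)[OF assms, of "g a" "sum g S"] by simp
  qed
  have "N x = N (\<Sum>i\<in>Basis. (x \<bullet> i) *\<^sub>R i)" by (simp add: euclidean_representation)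
  also have "\<dots> \<le> (\<Sum>i\<in>Basis. N ((x \<bullet> i) *\<^sub>R i))" by (rule sub) simp
  also have "\<dots> = (\<Sum>i\<in>Basis. \<bar>x \<bullet> i\<bar> * N i)" using nb(6)[OF assms] by simp
  also have "\<dots> \<le> (\<Sum>i\<in>Basis. norm x * N i)"
    by (rule sum_mono) (simp add: Basis_le_norm mult_right_mono nb(3)[OF assms])
  also have "\<dots> = (\<Sum>i\<in>Basis. N i) * norm x" by (simp add: sum_distrib_left mult.commute)
  finally show ?thesis .
qed

lemma norm_cont:
  fixes N :: "'a::euclidean_space \<Rightarrow> real"
  assumes "is_norm N"
  shows "continuous_on UNIV N"
proof -
  define C where "C = (\<Sum>i\<in>Basis. N i) + 1"
  have C: "C > 0" unfolding C_def using nb(3)[OF assms] by (simp add: sum_nonneg add_nonneg_pos)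
  have L: "\<bar>N x - N y\<bar> \<le> C * dist x y" for x y
  proof -
    have "N x \<le> N y + N (x - y)" using nb(5)[OF assms, of y "x - y"] by simp
    moreover have "N y \<le> N x + N (x - y)" using nb(5)[OF assms, of x "y - x"] nb(4)[OF assms, of x y] by simp
    moreover have "N (x - y) \<le> C * dist x y"
    proof -
      have "N (x - y) \<le> (\<Sum>i\<in>Basis. N i) * norm (x - y)" by (rule norm_upper[OF assms])
      also have "\<dots> \<le> C * norm (x - y)" unfolding C_def by (simp add: distrib_right)
      finally show ?thesis by (simp add: dist_norm)
    qed
    ultimately show ?thesis by linarith
  qed
  show ?thesis unfolding continuous_on_iff
  proof (intro ballI allI impI)
    fix x and e :: real assume "e > 0"
    show "\<exists>d>0. \<forall>x'\<in>UNIV. dist x' x < d \<longrightarrow> dist (N x') (N x) < e"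
    proof (intro exI[of _ "e / C"] conjI ballI impI)
      show "e / C > 0" using C \<open>e>0\<close> by simp
      fix x' assume "dist x' x < e / C"
      then have "C * dist x' x < e" using C by (simp add: field_simps)
      then show "dist (N x') (N x) < e" using L[of x' x] by (simp add: dist_real_def)
    qed
  qed
qed

lemma norm_lower:
  fixes N :: "'a::euclidean_space \<Rightarrow> real"
  assumes "is_norm N"
  shows "\<exists>c>0. \<forall>x. c * norm x \<le> N x"
proof -
  have "compact (sphere (0::'a) 1)" by simp
  moreover have "sphere (0::'a) 1 \<noteq> {}" by (metis norm_Basis SOME_Basis mem_sphere_0 empty_iff)
  ultimately obtain z where z: "z \<in> sphere 0 1" "\<forall>y\<in>sphere 0 1. N z \<le> N y"
    using continuous_attains_inf[of "sphere 0 1" N] continuous_on_subset[OF norm_cont[OF assms]] by blast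
  have "z \<noteq> 0" using z by auto
  then have pos: "N z > 0" using nb(3,7)[OF assms, of z] by linarith
  show ?thesis
  proof (intro exI[of _ "N z"] conjI allI)
    fix x :: 'a
    show "N z * norm x \<le> N x"
    proof (cases "x = 0")
      case True then show ?thesis using nb(1)[OF assms] by simp
    next
      case False
      then have "(1 / norm x) *\<^sub>R x \<in> sphere 0 1" by simp
      then have "N z \<le> N ((1 / norm x) *\<^sub>R x)" using z by blast
      also have "\<dots> = N x / norm x" using nb(6)[OF assms] by simp
      finally show ?thesis using False by (simp add: field_simps)
    qed
  qed (use pos in auto)
qed

lemma ball_cc:
  fixes N :: "'a::euclidean_space \<Rightarrow> real"
  assumes "is_norm N"
  shows "compact {x. N x \<le> 1}" "convex {x. N x \<le> 1}"
proof -
  obtain c where c: "c > 0" "\<forall>x. c * norm x \<le> N x" using norm_lower[OF assms] by blast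
  have "closed {x. N x \<le> 1}"
    using closed_Collect_le[OF norm_cont[OF assms] continuous_on_const] by simp
  moreover have "bounded {x. N x \<le> 1}"
    unfolding bounded_iff
  proof (intro exI[of _ "1/c"] ballI)
    fix x assume "x \<in> {x. N x \<le> 1}"
    then have "c * norm x \<le> 1" using c by (meson mem_Collect_eq order_trans)
    then show "norm x \<le> 1 / c" using c by (simp add: field_simps)
  qed
  ultimately show "compact {x. N x \<le> 1}" by (simp add: compact_eq_bounded_closed)
  show "convex {x. N x \<le> 1}" unfolding convex_def
  proof (intro ballI allI impI, clarify)
    fix x y and u v :: real assume h: "N x \<le> 1" "N y \<le> 1" "0 \<le> u" "0 \<le> v" "u + v = 1"
    have "N (u *\<^sub>R x + v *\<^sub>R y) \<le> N (u *\<^sub>R x) + N (v *\<^sub>R y)" by (rule nb(5)[OF assms])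
    also have "N (u *\<^sub>R x) = u * N x" using nb(6)[OF assms, of u x] h by simp
    also have "N (v *\<^sub>R y) = v * N y" using nb(6)[OF assms, of v y] h by simp
    also have "u * N x + v * N y \<le> u + v" using h mult_left_le[of "N x" u] mult_left_le[of "N y" v] by linarith
    finally show "N (u *\<^sub>R x + v *\<^sub>R y) \<le> 1" using h by simp
  qed
qed

lemma hb:
  fixes N :: "'a::euclidean_space \<Rightarrow> real"
  assumes N: "is_norm N" and u: "u \<noteq> 0"
  shows "\<exists>\<phi>\<in>dual_ball N. \<phi> u = N u"
proof -
  define s where "s = N u"
  have s: "s > 0" using nb(3,7)[OF N, of u] u unfolding s_def by linarith
  define S where "S = {z. N z < s}"
  have cS: "convex S" unfolding convex_def S_def
  proof (intro ballI allI impI, clarify)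
    fix x y and p q :: real assume h: "N x < s" "N y < s" "0 \<le> p" "0 \<le> q" "p + q = 1"
    have "N (p *\<^sub>R x + q *\<^sub>R y) \<le> N (p *\<^sub>R x) + N (q *\<^sub>R y)" by (rule nb(5)[OF N])
    also have "N (p *\<^sub>R x) = p * N x" using nb(6)[OF N, of p x] h by simp
    also have "N (q *\<^sub>R y) = q * N y" using nb(6)[OF N, of q y] h by simp
    also have "p * N x + q * N y < s"
    proof (cases "p = 0")
      case True then show ?thesis using h by simp
    next
      case False
      then have "p * N x < p * s" using h by simp
      moreover have "q * N y \<le> q * s" using h by (simp add: mult_left_mono)
      moreover have "p * s + q * s = s" using h by (metis distrib_right mult_1)
      ultimately show ?thesis using h by linarith
    qed
    finally show "N (p *\<^sub>R x + q *\<^sub>R y) < s" .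
  qed
  have "0 \<in> S" unfolding S_def using s nb(1)[OF N] by simp
  moreover have "u \<notin> S" unfolding S_def s_def by simp
  ultimately obtain a b where ab: "a \<noteq> 0" "\<forall>x\<in>S. a \<bullet> x \<le> b" "\<forall>x\<in>{u}. a \<bullet> x \<ge> b"
    using separating_hyperplane_sets[OF cS convex_singleton, of u] by blast
  have st1: "a \<bullet> z \<le> a \<bullet> u" if "N z < s" for z using ab that unfolding S_def by force
  have st2: "a \<bullet> u \<ge> 0" using st1[of 0] s nb(1)[OF N] by simp
  have st3: "a \<bullet> z \<le> a \<bullet> u" if "N z \<le> s" for z
  proof (rule ccontr)
    assume "\<not> ?thesis"
    then have gt: "a \<bullet> z > a \<bullet> u" by simp
    then have pz: "a \<bullet> z > 0" using st2 by linarith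
    define r where "r = (a \<bullet> z + a \<bullet> u) / (2 * (a \<bullet> z))"
    have r0: "r > 0" using pz st2 unfolding r_def by simp
    have r1: "r < 1" using pz gt unfolding r_def by (simp add: field_simps)
    have "N (r *\<^sub>R z) = r * N z" using nb(6)[OF N] r0 by simp
    also have "\<dots> \<le> r * s" using that r0 by simp
    also have "\<dots> < s" using r1 s by simp
    finally have "a \<bullet> (r *\<^sub>R z) \<le> a \<bullet> u" by (rule st1)
    moreover have "a \<bullet> (r *\<^sub>R z) = (a \<bullet> z + a \<bullet> u) / 2" unfolding r_def using pz by simp
    ultimately show False using gt by simp
  qed
  have st4: "s * (a \<bullet> z) \<le> (a \<bullet> u) * N z" for z
  proof (cases "z = 0")
    case True then show ?thesis using nb(1)[OF N] by simp
  next
    case False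
    then have nz: "N z > 0" using nb(3,7)[OF N, of z] by linarith
    have "N ((s / N z) *\<^sub>R z) = s" using nb(6)[OF N] nz s by simp
    then have "a \<bullet> ((s / N z) *\<^sub>R z) \<le> a \<bullet> u" by (intro st3) simp
    then have "(s / N z) * (a \<bullet> z) \<le> a \<bullet> u" by simp
    then show ?thesis using nz by (simp add: field_simps)
  qed
  have st5: "a \<bullet> u > 0"
  proof (rule ccontr)
    assume "\<not> ?thesis"
    then have "a \<bullet> u = 0" using st2 by simp
    then have "s * (a \<bullet> a) \<le> 0" using st4[of a] by simp
    then have "a \<bullet> a \<le> 0" using s by (simp add: mult_le_0_iff)
    then show False using ab(1) by (metis inner_gt_zero_iff not_le)
  qed
  define \<phi> where "\<phi> = (\<lambda>z. (s / (a \<bullet> u)) * (a \<bullet> z))"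
  have lin: "linear \<phi>" unfolding \<phi>_def
    by (intro linearI) (simp_all add: inner_add_right distrib_left mult.left_commute)
  have le: "\<phi> z \<le> N z" for z
  proof -
    have "s * (a \<bullet> z) / (a \<bullet> u) \<le> N z" using st4[of z] st5 by (simp add: pos_divide_le_eq mult.commute)
    then show ?thesis unfolding \<phi>_def by simp
  qed
  have "\<bar>\<phi> z\<bar> \<le> N z" for z using le[of z] le[of "-z"] nb(2)[OF N, of z] unfolding \<phi>_def by simp
  moreover have "\<phi> u = N u" unfolding \<phi>_def s_def using st5 by simp
  ultimately show ?thesis using lin unfolding dual_ball_def by blast
qed

lemma J_nonempty:
  fixes N :: "'a::euclidean_space \<Rightarrow> real"
  assumes N: "is_norm N"
  shows "duality_map N u \<noteq> {}"
proof (cases "u = 0")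
  case True
  have "(\<lambda>_. 0) \<in> dual_ball N" unfolding dual_ball_def using nb(3)[OF N] by (simp add: linear_zero)
  then show ?thesis unfolding duality_map_def True using nb(1)[OF N] by auto
next
  case False
  then show ?thesis using hb[OF N False] unfolding duality_map_def by auto
qed

lemma rep:
  fixes N :: "'a::euclidean_space \<Rightarrow> real"
  assumes N: "is_norm N" and fin: "finite {p. p extreme_point_of {x. N x \<le> 1}}"
  shows "\<exists>A\<subseteq>{p. p extreme_point_of {x. N x \<le> 1}}.
     duality_map N u = {\<phi>\<in>dual_ball N. \<forall>p\<in>A. \<phi> p = 1}"
proof (cases "u = 0")
  case True
  have "duality_map N u = {\<phi>\<in>dual_ball N. \<forall>p\<in>{}. \<phi> p = 1}"
    unfolding duality_map_def dual_ball_def True using nb(1)[OF N] by (auto simp: linear_0)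
  then show ?thesis by blast
next
  case False
  define P where "P = {p. p extreme_point_of {x. N x \<le> 1}}"
  have Pin: "N p \<le> 1" if "p \<in> P" for p using that unfolding P_def extreme_point_of_def by simp
  have nu: "N u > 0" using nb(3,7)[OF N, of u] False by linarith
  define z where "z = (1 / N u) *\<^sub>R u"
  have "N z = 1" unfolding z_def using nb(6)[OF N] nu by simp
  have KM: "{x. N x \<le> 1} = convex hull P"
    using Krein_Milman_Minkowski[OF ball_cc[OF N]] unfolding P_def .
  have "z \<in> {x. N x \<le> 1}" using \<open>N z = 1\<close> by simp
  then have "z \<in> convex hull P" by (simp only: KM)
  then have "z \<in> {y. \<exists>u. (\<forall>x\<in>P. 0 \<le> u x) \<and> sum u P = 1 \<and> sum (\<lambda>x. u x *\<^sub>R x) P = y}"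
    by (simp only: convex_hull_finite[OF fin[folded P_def]])
  then obtain l where l: "\<forall>x\<in>P. 0 \<le> l x" "sum l P = 1" "(\<Sum>x\<in>P. l x *\<^sub>R x) = z"
    by blast
  define A where "A = {p\<in>P. l p > 0}"
  have phz: "\<phi> z = (\<Sum>p\<in>P. l p * \<phi> p)" if "linear \<phi>" for \<phi>
  proof -
    have "\<phi> z = \<phi> (\<Sum>x\<in>P. l x *\<^sub>R x)" using l(3) by simp
    also have "\<dots> = (\<Sum>x\<in>P. \<phi> (l x *\<^sub>R x))" by (rule linear_sum[OF that])
    also have "\<dots> = (\<Sum>p\<in>P. l p * \<phi> p)" using linear_scale[OF that] by simp
    finally show ?thesis .
  qed
  have phu: "\<phi> u = N u * \<phi> z" if "linear \<phi>" for \<phi>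
    unfolding z_def using linear_scale[OF that] nu by simp
  have "duality_map N u = {\<phi>\<in>dual_ball N. \<forall>p\<in>A. \<phi> p = 1}"
  proof (intro set_eqI iffI)
    fix \<phi> assume "\<phi> \<in> duality_map N u"
    then have d: "\<phi> \<in> dual_ball N" "\<phi> u = N u" unfolding duality_map_def by auto
    then have lin: "linear \<phi>" and bd: "\<And>x. \<bar>\<phi> x\<bar> \<le> N x" unfolding dual_ball_def by auto
    have "\<phi> z = 1" using phu[OF lin] d(2) nu by simp
    then have s0: "(\<Sum>p\<in>P. l p * (1 - \<phi> p)) = 0"
      using phz[OF lin] l(2) by (simp add: right_diff_distrib sum_subtractf)
    have nn: "\<forall>p\<in>P. l p * (1 - \<phi> p) \<ge> 0"
    proof
      fix p assume p: "p \<in> P"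
      have "\<phi> p \<le> 1" using bd[of p] Pin[OF p] by linarith
      then show "l p * (1 - \<phi> p) \<ge> 0" using l(1) p by simp
    qed
    have finP: "finite P" using fin unfolding P_def .
    have "\<forall>p\<in>P. l p * (1 - \<phi> p) = 0"
      using sum_nonneg_eq_0_iff[OF finP, of "\<lambda>p. l p * (1 - \<phi> p)"] nn s0 by blast
    then have "\<forall>p\<in>A. \<phi> p = 1" unfolding A_def by auto
    then show "\<phi> \<in> {\<phi>\<in>dual_ball N. \<forall>p\<in>A. \<phi> p = 1}" using d by auto
  next
    fix \<phi> assume "\<phi> \<in> {\<phi>\<in>dual_ball N. \<forall>p\<in>A. \<phi> p = 1}"
    then have d: "\<phi> \<in> dual_ball N" "\<forall>p\<in>A. \<phi> p = 1" by auto
    then have lin: "linear \<phi>" unfolding dual_ball_def by auto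
    have "(\<Sum>p\<in>P. l p * \<phi> p) = (\<Sum>p\<in>P. l p)"
    proof (rule sum.cong)
      fix p assume "p \<in> P"
      then show "l p * \<phi> p = l p" using d(2) l(1) unfolding A_def by (cases "l p > 0") auto
    qed simp
    then have "\<phi> z = 1" using phz[OF lin] l(2) by simp
    then have "\<phi> u = N u" using phu[OF lin] by simp
    then show "\<phi> \<in> duality_map N u" using d unfolding duality_map_def by auto
  qed
  moreover have "A \<subseteq> {p. p extreme_point_of {x. N x \<le> 1}}" unfolding A_def P_def by blast
  ultimately show ?thesis by blast
qed

theorem lemma2p6:
  fixes N :: "'a::euclidean_space \<Rightarrow> real" and f :: "'a \<Rightarrow> 'a" and x y :: 'a
  assumes "polyhedral_norm N"
    and "nonexpansive N f"
    and "real_analytic f"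
    and "f x = x" and "f y = y"
    and "\<forall>\<phi>\<in>M_set N f. \<phi> x = \<phi> y"
  shows "x = y"
proof -
  have N: "is_norm N" and fin: "finite {p. p extreme_point_of {x. N x \<le> 1}}"
    using assms(1) unfolding polyhedral_norm_def by auto
  define P where "P = {p. p extreme_point_of {x. N x \<le> 1}}"
  define D where "D = (\<lambda>A. {\<phi>\<in>dual_ball N. \<forall>p\<in>A. \<phi> p = (1::real)})"
  define F where "F = {E. locked N f E \<and> E \<subseteq> duality_map N (x - y)}"
  have "F \<subseteq> D ` Pow P"
  proof
    fix E assume "E \<in> F"
    then obtain v w where "duality_map N (v - w) = E" unfolding F_def locked_def by auto
    then show "E \<in> D ` Pow P" using rep[OF N fin, of "v - w"] unfolding D_def P_def by blast
  qed
  moreover have "finite (D ` Pow P)" using fin unfolding P_def by simp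
  ultimately have finF: "finite F" by (rule finite_subset)
  have xyS: "x \<in> S_set E f" "y \<in> S_set E f" for E unfolding S_set_def using assms(4,5) by auto
  have "duality_map N (x - y) \<subseteq> dual_ball N" unfolding duality_map_def by auto
  then have "duality_map N (x - y) \<in> F" unfolding F_def locked_def using xyS by blast
  then have "F \<noteq> {}" by blast
  then obtain m where m: "m \<in> F" "\<forall>b\<in>F. b \<le> m \<longrightarrow> m = b"
    using finite_has_minimal[OF finF] by blast
  have ml: "minimal_locked N f m" unfolding minimal_locked_def
  proof (intro conjI allI impI)
    show "locked N f m" using m(1) unfolding F_def by auto
    fix E' assume "E' \<subset> m"
    show "\<not> locked N f E'"
    proof
      assume "locked N f E'"
      then have "E' \<in> F" using \<open>E' \<subset> m\<close> m(1) unfolding F_def by auto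
      then show False using m(2) \<open>E' \<subset> m\<close> by blast
    qed
  qed
  obtain v w where "duality_map N (v - w) = m" using m(1) unfolding F_def locked_def by auto
  then obtain \<phi> where \<phi>: "\<phi> \<in> m" using J_nonempty[OF N, of "v - w"] by auto
  then have "\<phi> \<in> M_set N f" unfolding M_set_def using ml by blast
  then have e: "\<phi> x = \<phi> y" using assms(6) by blast
  have "\<phi> \<in> duality_map N (x - y)" using \<phi> m(1) unfolding F_def by auto
  then have "\<phi> (x - y) = N (x - y)" "linear \<phi>" unfolding duality_map_def dual_ball_def by auto
  then have "N (x - y) = 0" using e by (simp add: linear_diff)
  then show ?thesis using nb(7)[OF N] by simp
qed

end
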